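(* For every $t \ge t_1$ and $p\ge 0$ we have $H_0^p(L^t)=H_0^p(K^t)$, but the equality $H_k^p(L^t)=H_k^p(K^t)$ does not hold in general for $1\le k \le \dim(K)-1$.
   Context: Let $X$ be a finite set and $(\mathcal{P}^{t_m})_{m\le M}$ a (not necessarily hierarchical) sequence of partitions of $X$ indexed by scales $t_1<t_2<\dots<t_M$; write $x\sim_t y$ if $x,y$ lie in the same cluster of the partition $\mathcal{P}^t$ at scale $t$ (the scale function being piecewise constant, $\mathcal{P}^t=\mathcal{P}^{t_m}$ for $t_m\le t<t_{m+1}$). The Multiscale Clustering Filtration (MCF) is $K^{t_m}=\bigcup_{l\le m}\{\Delta C : C\in\mathcal{P}^{t_l}\}$, where $\Delta C$ is the solid simplex of all non-empty subsets of $C$; its continuous-indexed version is $K^t=K^{t_m}$ for the largest $t_m\le t$, and $K:=K^{t_M}$. The Cluster Assignment Graph (CAG) is the undirected weighted graph on vertex set $X$ with adjacency matrix $A_{xy}=\min\{t\ge t_1 : x\sim_t y\}$ (with $\min\emptyset=0$, meaning $x,y$ are not linked if never in a common cluster). For $t\ge t_1$, $L^t$ is the clique complex of the thresholded CAG $G_t=(X,E_t)$ containing only the edges $\{x,y\}$ with $A_{xy}\le t$, giving the clique complex filtration $\mathcal{L}=(L^t)_{t\ge t_1}$. $H_k^p(\cdot)$ denotes the $p$-persistent $k$-th homology group (computed over $\mathbb{Z}_2$) along the respective filtration. *)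

theory Defs
  imports Complex_Main "HOL-Library.Disjoint_Sets"
begin

text \<open>A sequence of partitions P 0, ..., P (M-1) of a finite set X, indexed by
  strictly increasing real scales ts 0 < ts 1 < ... < ts (M-1).
  (Paper index m = 1..M corresponds to our m-1; t_1 = ts 0.)\<close>

definition mcf_data :: "'a set \<Rightarrow> nat \<Rightarrow> (nat \<Rightarrow> real) \<Rightarrow> (nat \<Rightarrow> 'a set set) \<Rightarrow> bool" where
  "mcf_data X M ts P \<longleftrightarrow> finite X \<and> M \<ge> 1 \<and> strict_mono_on {..<M} ts \<and>
     (\<forall>m<M. partition_on X (P m))"

definition partition_at :: "nat \<Rightarrow> (nat \<Rightarrow> real) \<Rightarrow> (nat \<Rightarrow> 'a set set) \<Rightarrow> real \<Rightarrow> 'a set set" where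
  "partition_at M ts P t = P (GREATEST m. m < M \<and> ts m \<le> t)"

definition same_cluster :: "nat \<Rightarrow> (nat \<Rightarrow> real) \<Rightarrow> (nat \<Rightarrow> 'a set set) \<Rightarrow> real \<Rightarrow> 'a \<Rightarrow> 'a \<Rightarrow> bool" where
  "same_cluster M ts P t x y \<longleftrightarrow> (\<exists>C \<in> partition_at M ts P t. x \<in> C \<and> y \<in> C)"

text \<open>Simplicial complexes are sets of simplices; a simplex is a nonempty finite vertex set.
  K^t = union of the solid simplices of all clusters at scales t_l <= t.\<close>
definition MCF :: "nat \<Rightarrow> (nat \<Rightarrow> real) \<Rightarrow> (nat \<Rightarrow> 'a set set) \<Rightarrow> real \<Rightarrow> 'a set set" where
  "MCF M ts P t = {\<sigma>. \<sigma> \<noteq> {} \<and> (\<exists>l<M. ts l \<le> t \<and> (\<exists>C \<in> P l. \<sigma> \<subseteq> C))}"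

definition CAG_linked :: "nat \<Rightarrow> (nat \<Rightarrow> real) \<Rightarrow> (nat \<Rightarrow> 'a set set) \<Rightarrow> 'a \<Rightarrow> 'a \<Rightarrow> bool" where
  "CAG_linked M ts P x y \<longleftrightarrow> {t. ts 0 \<le> t \<and> same_cluster M ts P t x y} \<noteq> {}"

text \<open>Adjacency matrix A_xy = min{t >= t_1 : x ~_t y}, with min of the empty set = 0.\<close>
definition CAG :: "nat \<Rightarrow> (nat \<Rightarrow> real) \<Rightarrow> (nat \<Rightarrow> 'a set set) \<Rightarrow> 'a \<Rightarrow> 'a \<Rightarrow> real" where
  "CAG M ts P x y =
     (if CAG_linked M ts P x y then Inf {t. ts 0 \<le> t \<and> same_cluster M ts P t x y} else 0)"

definition CAG_edge :: "nat \<Rightarrow> (nat \<Rightarrow> real) \<Rightarrow> (nat \<Rightarrow> 'a set set) \<Rightarrow> real \<Rightarrow> 'a \<Rightarrow> 'a \<Rightarrow> bool" where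
  "CAG_edge M ts P t x y \<longleftrightarrow> x \<noteq> y \<and> CAG_linked M ts P x y \<and> CAG M ts P x y \<le> t"

definition clique_complex :: "'a set \<Rightarrow> ('a \<Rightarrow> 'a \<Rightarrow> bool) \<Rightarrow> 'a set set" where
  "clique_complex V E = {\<sigma>. \<sigma> \<noteq> {} \<and> finite \<sigma> \<and> \<sigma> \<subseteq> V \<and>
                                (\<forall>x\<in>\<sigma>. \<forall>y\<in>\<sigma>. x \<noteq> y \<longrightarrow> E x y)}"

definition CAG_clique :: "'a set \<Rightarrow> nat \<Rightarrow> (nat \<Rightarrow> real) \<Rightarrow> (nat \<Rightarrow> 'a set set) \<Rightarrow> real \<Rightarrow> 'a set set" where
  "CAG_clique X M ts P t = clique_complex X (CAG_edge M ts P t)"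

text \<open>A Z_2 k-chain is a finite set of k-simplices (simplices with k+1 vertices);
  addition is symmetric difference.\<close>
definition chains :: "'a set set \<Rightarrow> nat \<Rightarrow> 'a set set set" where
  "chains S k = {c. finite c \<and> c \<subseteq> {\<sigma> \<in> S. card \<sigma> = k + 1}}"

definition chain_add :: "'a set set \<Rightarrow> 'a set set \<Rightarrow> 'a set set" where
  "chain_add c d = (c - d) \<union> (d - c)"

definition bd :: "nat \<Rightarrow> 'a set set \<Rightarrow> 'a set set" where
  "bd k c = (if k = 0 then {} else {\<tau>. card \<tau> = k \<and> odd (card {\<sigma> \<in> c. \<tau> \<subseteq> \<sigma>})})"

definition cycles :: "'a set set \<Rightarrow> nat \<Rightarrow> 'a set set set" where
  "cycles S k = {c \<in> chains S k. bd k c = {}}"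

definition boundaries :: "'a set set \<Rightarrow> nat \<Rightarrow> 'a set set set" where
  "boundaries S k = bd (k + 1) ` chains S (k + 1)"

definition hclass :: "'a set set \<Rightarrow> 'a set set set \<Rightarrow> 'a set set set" where
  "hclass c B = (\<lambda>b. chain_add c b) ` B"

text \<open>p-persistent k-th homology group of a filtration F at t: the image of
  H_k(F t) -> H_k(F (t+p)) induced by inclusion, i.e. the set of classes in
  H_k(F (t+p)) of k-cycles of F t.\<close>
definition pers_homology :: "nat \<Rightarrow> real \<Rightarrow> (real \<Rightarrow> 'a set set) \<Rightarrow> real \<Rightarrow> 'a set set set set" where
  "pers_homology k p F t = (\<lambda>c. hclass c (boundaries (F (t + p)) k)) ` cycles (F t) k"

definition cdim :: "'a set set \<Rightarrow> nat" where
  "cdim S = Max (card ` S) - 1"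

end

theory Submission
  imports Defs
begin



lemma mcf_mono:
  assumes "mcf_data X M ts P" "a \<le> b" "b < M"
  shows "ts a \<le> ts b"
  using assms unfolding mcf_data_def
  by (meson strict_mono_on_leD lessThan_iff le_less_trans)

lemma mcf_smono:
  assumes "mcf_data X M ts P" "a < b" "b < M"
  shows "ts a < ts b"
  using assms unfolding mcf_data_def
  by (meson strict_mono_onD lessThan_iff less_trans)

lemma mcf_part:
  assumes "mcf_data X M ts P" "l < M"
  shows "partition_on X (P l)"
  using assms unfolding mcf_data_def by auto

lemma part_sub: "partition_on X Q \<Longrightarrow> C \<in> Q \<Longrightarrow> C \<subseteq> X"
  unfolding partition_on_def by auto

lemma part_cover: "partition_on X Q \<Longrightarrow> x \<in> X \<Longrightarrow> \<exists>C\<in>Q. x \<in> C"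
  unfolding partition_on_def by auto

lemma greatest_props:
  assumes "mcf_data X M ts P" "ts 0 \<le> t"
  shows "(GREATEST m. m < M \<and> ts m \<le> t) < M"
    "ts (GREATEST m. m < M \<and> ts m \<le> t) \<le> t"
    "\<And>m. m < M \<Longrightarrow> ts m \<le> t \<Longrightarrow> m \<le> (GREATEST m. m < M \<and> ts m \<le> t)"
proof -
  have M: "0 < M" using assms unfolding mcf_data_def by auto
  have a: "(\<lambda>m. m < M \<and> ts m \<le> t) 0" using M assms by auto
  have b: "\<And>y. (\<lambda>m. m < M \<and> ts m \<le> t) y \<Longrightarrow> y \<le> M" by auto
  show "(GREATEST m. m < M \<and> ts m \<le> t) < M" "ts (GREATEST m. m < M \<and> ts m \<le> t) \<le> t"
    using GreatestI_nat[of "\<lambda>m. m < M \<and> ts m \<le> t", OF a b] by auto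
  fix m assume "m < M" "ts m \<le> t"
  then show "m \<le> (GREATEST m. m < M \<and> ts m \<le> t)"
    using Greatest_le_nat[of "\<lambda>m. m < M \<and> ts m \<le> t" m M] by auto
qed

lemma partition_at_ts:
  assumes "mcf_data X M ts P" "l < M"
  shows "partition_at M ts P (ts l) = P l"
proof -
  have t0: "ts 0 \<le> ts l" using mcf_mono[OF assms(1) _ assms(2)] by auto
  let ?g = "GREATEST m. m < M \<and> ts m \<le> ts l"
  have "l \<le> ?g" using greatest_props(3)[OF assms(1) t0 assms(2)] by auto
  moreover have "\<not> l < ?g"
    using greatest_props(1,2)[OF assms(1) t0] mcf_smono[OF assms(1)] by fastforce
  ultimately have "?g = l" by auto
  then show ?thesis unfolding partition_at_def by simp
qed

lemma CAG_edge_iff: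
  assumes mcf: "mcf_data X M ts P" and s: "ts 0 \<le> s"
  shows "CAG_edge M ts P s x y \<longleftrightarrow> x \<noteq> y \<and> (\<exists>l<M. ts l \<le> s \<and> (\<exists>C\<in>P l. x \<in> C \<and> y \<in> C))"
proof -
  define S where "S = {t. ts 0 \<le> t \<and> same_cluster M ts P t x y}"
  have bdd: "bdd_below S" unfolding S_def bdd_below_def by auto
  have lk: "CAG_linked M ts P x y \<longleftrightarrow> S \<noteq> {}" unfolding CAG_linked_def S_def by simp
  have cag: "CAG_linked M ts P x y \<Longrightarrow> CAG M ts P x y = Inf S" unfolding CAG_def S_def by simp
  show ?thesis
  proof
    assume e: "CAG_edge M ts P s x y"
    then have ne: "S \<noteq> {}" and le: "Inf S \<le> s" and xy: "x \<noteq> y"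
      using lk cag unfolding CAG_edge_def by auto
    define I where "I = {m. m < M \<and> (\<exists>C\<in>P m. x \<in> C \<and> y \<in> C)}"
    have gI: "\<And>t. t \<in> S \<Longrightarrow> (GREATEST m. m < M \<and> ts m \<le> t) \<in> I
              \<and> ts (GREATEST m. m < M \<and> ts m \<le> t) \<le> t"
      using greatest_props[OF mcf] unfolding S_def I_def same_cluster_def partition_at_def by auto
    then have Ine: "I \<noteq> {}" using ne by auto
    have Ifin: "finite I" unfolding I_def by auto
    define m0 where "m0 = Min I"
    have m0I: "m0 \<in> I" using Ine Ifin m0_def by auto
    have "\<And>t. t \<in> S \<Longrightarrow> ts m0 \<le> t"
    proof -
      fix t assume "t \<in> S"
      then have g: "(GREATEST m. m < M \<and> ts m \<le> t) \<in> I" "ts (GREATEST m. m < M \<and> ts m \<le> t) \<le> t"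
        using gI by auto
      have "m0 \<le> (GREATEST m. m < M \<and> ts m \<le> t)" using g(1) Ifin m0_def by auto
      then have "ts m0 \<le> ts (GREATEST m. m < M \<and> ts m \<le> t)"
        using mcf_mono[OF mcf] g(1) unfolding I_def by auto
      then show "ts m0 \<le> t" using g(2) by auto
    qed
    then have "ts m0 \<le> Inf S" using ne by (meson cInf_greatest)
    then show "x \<noteq> y \<and> (\<exists>l<M. ts l \<le> s \<and> (\<exists>C\<in>P l. x \<in> C \<and> y \<in> C))"
      using le xy m0I unfolding I_def by force
  next
    assume "x \<noteq> y \<and> (\<exists>l<M. ts l \<le> s \<and> (\<exists>C\<in>P l. x \<in> C \<and> y \<in> C))"
    then obtain l C where xy: "x \<noteq> y" and l: "l < M" "ts l \<le> s" "C \<in> P l" "x \<in> C" "y \<in> C" by auto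
    have "ts l \<in> S" unfolding S_def same_cluster_def
      using partition_at_ts[OF mcf l(1)] mcf_mono[OF mcf _ l(1)] l by auto
    then have "S \<noteq> {}" "Inf S \<le> ts l" using bdd by (auto intro: cInf_lower)
    then show "CAG_edge M ts P s x y" unfolding CAG_edge_def using lk cag xy l by auto
  qed
qed


lemma chains_cong:
  "{\<sigma>\<in>S. card \<sigma> = k + 1} = {\<sigma>\<in>T. card \<sigma> = k + 1} \<Longrightarrow> chains S k = chains T k"
  unfolding chains_def by simp

lemma card1_eq:
  assumes mcf: "mcf_data X M ts P" and s: "ts 0 \<le> s"
  shows "{\<sigma>\<in>CAG_clique X M ts P s. card \<sigma> = 0 + 1} = {\<sigma>\<in>MCF M ts P s. card \<sigma> = 0 + 1}"
proof -
  have M: "0 < M" using mcf unfolding mcf_data_def by auto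
  have "\<sigma> \<in> CAG_clique X M ts P s \<longleftrightarrow> \<sigma> \<in> MCF M ts P s" if "card \<sigma> = 1" for \<sigma>
  proof -
    obtain x where x: "\<sigma> = {x}" using \<open>card \<sigma> = 1\<close> card_1_singletonE by blast
    have "{x} \<in> MCF M ts P s \<longleftrightarrow> x \<in> X"
    proof
      assume "{x} \<in> MCF M ts P s"
      then obtain l C where "l < M" "C \<in> P l" "x \<in> C" unfolding MCF_def by auto
      then show "x \<in> X" using part_sub[OF mcf_part[OF mcf]] by blast
    next
      assume "x \<in> X"
      then obtain C where "C \<in> P 0" "x \<in> C" using part_cover[OF mcf_part[OF mcf M]] by blast
      then show "{x} \<in> MCF M ts P s" unfolding MCF_def using M s by auto
    qed
    then show ?thesis unfolding x CAG_clique_def clique_complex_def by auto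
  qed
  then show ?thesis by auto
qed

lemma card2_eq:
  assumes mcf: "mcf_data X M ts P" and s: "ts 0 \<le> s"
  shows "{\<sigma>\<in>CAG_clique X M ts P s. card \<sigma> = 1 + 1} = {\<sigma>\<in>MCF M ts P s. card \<sigma> = 1 + 1}"
proof -
  have "\<sigma> \<in> CAG_clique X M ts P s \<longleftrightarrow> \<sigma> \<in> MCF M ts P s" if c2: "card \<sigma> = 2" for \<sigma>
  proof -
    obtain x y where x: "\<sigma> = {x,y}" "x \<noteq> y" using card_2_iff[THEN iffD1, OF c2] by auto
    have "{x,y} \<in> MCF M ts P s \<longleftrightarrow> (\<exists>l<M. ts l \<le> s \<and> (\<exists>C\<in>P l. x \<in> C \<and> y \<in> C))"
      unfolding MCF_def by auto
    moreover have "{x,y} \<in> CAG_clique X M ts P s \<longleftrightarrow> x \<in> X \<and> y \<in> X \<and> CAG_edge M ts P s x y \<and> CAG_edge M ts P s y x"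
      unfolding CAG_clique_def clique_complex_def using x(2) by auto
    moreover have "(\<exists>l<M. ts l \<le> s \<and> (\<exists>C\<in>P l. x \<in> C \<and> y \<in> C)) \<Longrightarrow> x \<in> X \<and> y \<in> X"
      using part_sub[OF mcf_part[OF mcf]] by blast
    moreover have "CAG_edge M ts P s x y \<longleftrightarrow> (\<exists>l<M. ts l \<le> s \<and> (\<exists>C\<in>P l. x \<in> C \<and> y \<in> C))"
      using CAG_edge_iff[OF mcf s] x(2) by simp
    moreover have "CAG_edge M ts P s y x \<longleftrightarrow> (\<exists>l<M. ts l \<le> s \<and> (\<exists>C\<in>P l. x \<in> C \<and> y \<in> C))"
      using CAG_edge_iff[OF mcf s] x(2) by auto
    ultimately show ?thesis unfolding x by metis
  qed
  then show ?thesis by (auto simp del: One_nat_def)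
qed

lemma part1:
  assumes mcf: "mcf_data X M ts P" and t: "ts 0 \<le> t" and p: "p \<ge> 0"
  shows "pers_homology 0 p (CAG_clique X M ts P) t = pers_homology 0 p (MCF M ts P) t"
proof -
  have tp: "ts 0 \<le> t + p" using t p by auto
  have c0: "cycles (CAG_clique X M ts P t) 0 = cycles (MCF M ts P t) 0"
    unfolding cycles_def using chains_cong[OF card1_eq[OF mcf t]] by simp
  have b0: "boundaries (CAG_clique X M ts P (t+p)) 0 = boundaries (MCF M ts P (t+p)) 0"
    unfolding boundaries_def using chains_cong[OF card2_eq[OF mcf tp]] by simp
  show ?thesis unfolding pers_homology_def c0 b0 by simp
qed




lemma mcf_sub:
  assumes "mcf_data X M ts P"
  shows "MCF M ts P t \<subseteq> Pow X"
  using part_sub[OF mcf_part[OF assms]] unfolding MCF_def by blast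

lemma bd_empty: "bd k {} = {}"
  unfolding bd_def by simp

lemma pers_no_higher:
  assumes "\<forall>\<sigma>\<in>F s. card \<sigma> \<noteq> k + 2"
  shows "pers_homology k 0 F s = (\<lambda>c. {c}) ` cycles (F s) k"
proof -
  have e: "{\<sigma>\<in>F s. card \<sigma> = k + 1 + 1} = {}" using assms by auto
  have "chains (F s) (k+1) = {{}}" unfolding chains_def e by blast
  then have "boundaries (F s) k = {{}}" unfolding boundaries_def by (simp add: bd_empty)
  moreover have h: "\<And>c. hclass c {{}} = {c}" unfolding hclass_def chain_add_def by simp
  ultimately show ?thesis unfolding pers_homology_def by (simp add: h)
qed

lemma pers_no_k:
  assumes "\<forall>\<sigma>\<in>F s. card \<sigma> \<noteq> k + 1"
  shows "card (pers_homology k p F s) = 1"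
proof -
  have e: "{\<sigma>\<in>F s. card \<sigma> = k + 1} = {}" using assms by blast
  have "chains (F s) k = {{}}" unfolding chains_def e by blast
  then have "cycles (F s) k = {{}}" unfolding cycles_def using bd_empty by blast
  then show ?thesis unfolding pers_homology_def by simp
qed

lemma card_ne1: "a \<in> A \<Longrightarrow> b \<in> A \<Longrightarrow> a \<noteq> b \<Longrightarrow> card A \<noteq> 1"
  by (metis card_1_singletonE singletonD)

lemma two_classes:
  assumes "\<forall>\<sigma>\<in>F s. card \<sigma> \<noteq> k + 2" "c \<in> cycles (F s) k" "c \<noteq> {}"
  shows "card (pers_homology k 0 F s) \<noteq> 1"
proof -
  have "{} \<in> cycles (F s) k" unfolding cycles_def chains_def by (simp add: bd_empty)
  then show ?thesis unfolding pers_no_higher[of F s k, OF assms(1)]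
    using assms(2,3) by (intro card_ne1[of "{{}}" _ "{c}"]) auto
qed

definition pairpart :: "'a set \<Rightarrow> 'a \<Rightarrow> 'a \<Rightarrow> 'a set set" where
  "pairpart Y v w = insert {v,w} ((\<lambda>u. {u}) ` (Y - {v,w}))"

lemma pp_part: "v \<in> Y \<Longrightarrow> w \<in> Y \<Longrightarrow> partition_on Y (pairpart Y v w)"
  unfolding partition_on_def pairpart_def disjoint_def by auto

lemma sing_part: "partition_on Y ((\<lambda>u. {u}) ` Y)"
  unfolding partition_on_def disjoint_def by auto

lemma all_part: "Y \<noteq> {} \<Longrightarrow> partition_on Y {Y}"
  unfolding partition_on_def disjoint_def by auto

lemma pp_card: "C \<in> pairpart Y v w \<Longrightarrow> card C \<le> 2"
  unfolding pairpart_def by (auto simp: card_insert_le_m1)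

lemma cdim_ge:
  assumes "finite S" "Y \<in> S"
  shows "card Y - 1 \<le> cdim S"
  unfolding cdim_def using assms by (simp add: diff_le_mono)




definition Y3 :: "nat set" where "Y3 = {0,1,2}"
definition Q3 :: "nat \<Rightarrow> nat set set" where
  "Q3 m = (if m = 0 then pairpart Y3 0 1 else if m = 1 then pairpart Y3 1 2
           else if m = 2 then pairpart Y3 0 2 else {Y3})"
definition E3 :: "nat set set" where "E3 = {{0,1},{1,2},{0,2}}"

lemma tri_mcf: "mcf_data Y3 4 real Q3"
  unfolding mcf_data_def
proof (intro conjI allI impI)
  show "finite Y3" unfolding Y3_def by simp
  show "strict_mono_on {..<4} real" by (rule strict_mono_onI) simp
  fix m :: nat assume "m < 4"
  show "partition_on Y3 (Q3 m)" unfolding Q3_def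
    by (auto intro!: pp_part all_part simp: Y3_def)
qed simp

lemma filt_insert: "{x \<in> insert a A. P x} = (if P a then insert a {x\<in>A. P x} else {x\<in>A. P x})"
  by auto

lemma tri_K_small: "\<sigma> \<in> MCF 4 real Q3 2 \<Longrightarrow> card \<sigma> \<le> 2"
proof -
  assume "\<sigma> \<in> MCF 4 real Q3 2"
  then obtain l C where l: "l < 4" "real l \<le> 2" "C \<in> Q3 l" "\<sigma> \<subseteq> C" unfolding MCF_def by auto
  then have "l \<le> 2" by simp
  then have "C \<in> pairpart Y3 0 1 \<or> C \<in> pairpart Y3 1 2 \<or> C \<in> pairpart Y3 0 2"
    using l(3) unfolding Q3_def by (auto split: if_splits)
  then have "card C \<le> 2" by (metis pp_card)
  moreover have "finite C" using \<open>card C \<le> 2\<close> l(4) \<open>C \<in> pairpart Y3 0 1 \<or> C \<in> pairpart Y3 1 2 \<or> C \<in> pairpart Y3 0 2\<close>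
    unfolding pairpart_def by auto
  ultimately show "card \<sigma> \<le> 2" using card_mono[of C \<sigma>] l(4) by linarith
qed

lemma tri_E_in_K: "E3 \<subseteq> MCF 4 real Q3 2"
proof -
  have a: "{0,1} \<in> MCF 4 real Q3 2" unfolding MCF_def
    by (rule CollectI, rule conjI, simp, rule exI[of _ 0]) (auto simp: Q3_def pairpart_def)
  have b: "{1,2} \<in> MCF 4 real Q3 2" unfolding MCF_def
    by (rule CollectI, rule conjI, simp, rule exI[of _ 1]) (auto simp: Q3_def pairpart_def)
  have c: "{0,2} \<in> MCF 4 real Q3 2" unfolding MCF_def
    by (rule CollectI, rule conjI, simp, rule exI[of _ 2]) (auto simp: Q3_def pairpart_def)
  show ?thesis unfolding E3_def using a b c by auto
qed

lemma E3_card: "\<sigma> \<in> E3 \<Longrightarrow> card \<sigma> = 2"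
  unfolding E3_def by auto

lemma bd1_E3: "bd 1 E3 = {}"
proof -
  have "even (card {\<sigma> \<in> E3. \<tau> \<subseteq> \<sigma>})" if c1: "card \<tau> = 1" for \<tau> :: "nat set"
  proof -
    obtain v where v: "\<tau> = {v}" using c1 card_1_singletonE by blast
    consider "v = 0" | "v = 1" | "v = 2" | "v \<notin> {0,1,2}" by auto
    then show ?thesis
    proof cases
      case 1
      then have "{\<sigma> \<in> E3. \<tau> \<subseteq> \<sigma>} = {{0,1},{0,2}}" unfolding E3_def v by auto
      then show ?thesis by (simp add: doubleton_eq_iff)
    next
      case 2
      then have "{\<sigma> \<in> E3. \<tau> \<subseteq> \<sigma>} = {{0,1},{1,2}}" unfolding E3_def v by auto
      then show ?thesis by (simp add: doubleton_eq_iff)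
    next
      case 3
      then have "{\<sigma> \<in> E3. \<tau> \<subseteq> \<sigma>} = {{1,2},{0,2}}" unfolding E3_def v by auto
      then show ?thesis by (simp add: doubleton_eq_iff)
    next
      case 4
      then have "{\<sigma> \<in> E3. \<tau> \<subseteq> \<sigma>} = {}" unfolding E3_def v by auto
      then show ?thesis by (metis card.empty even_zero)
    qed
  qed
  then show ?thesis unfolding bd_def by auto
qed

lemma tri_K: "card (pers_homology 1 0 (MCF 4 real Q3) 2) \<noteq> 1"
proof (rule two_classes)
  show "\<forall>\<sigma>\<in>MCF 4 real Q3 2. card \<sigma> \<noteq> 1 + 2" using tri_K_small by fastforce
  show "E3 \<in> cycles (MCF 4 real Q3 2) 1"
    unfolding cycles_def chains_def using tri_E_in_K E3_card bd1_E3
    by (auto simp: E3_def)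
  show "E3 \<noteq> {}" unfolding E3_def by simp
qed




lemma Y3_pairs: "x \<noteq> y \<Longrightarrow> x \<in> Y3 \<Longrightarrow> y \<in> Y3 \<Longrightarrow> {x,y} \<in> E3"
  unfolding Y3_def E3_def by auto

lemma tri_edge: "CAG_edge 4 real Q3 2 x y \<longleftrightarrow> x \<noteq> y \<and> x \<in> Y3 \<and> y \<in> Y3"
proof -
  have i: "CAG_edge 4 real Q3 2 x y \<longleftrightarrow> x \<noteq> y \<and> (\<exists>l<4. real l \<le> 2 \<and> (\<exists>C\<in>Q3 l. x \<in> C \<and> y \<in> C))"
    using CAG_edge_iff[OF tri_mcf, of 2 x y] by simp
  show ?thesis
  proof
    assume "CAG_edge 4 real Q3 2 x y"
    then obtain l C where "x \<noteq> y" "l < 4" "C \<in> Q3 l" "x \<in> C" "y \<in> C" using i by auto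
    then show "x \<noteq> y \<and> x \<in> Y3 \<and> y \<in> Y3" using part_sub[OF mcf_part[OF tri_mcf]] by blast
  next
    assume a: "x \<noteq> y \<and> x \<in> Y3 \<and> y \<in> Y3"
    then have "{x,y} \<in> E3" using Y3_pairs by blast
    then have "{x,y} = {0,1} \<or> {x,y} = {1,2} \<or> {x,y} = {0,2}" unfolding E3_def by simp
    then have "\<exists>l<4. real l \<le> 2 \<and> (\<exists>C\<in>Q3 l. x \<in> C \<and> y \<in> C)"
    proof (elim disjE)
      assume h: "{x,y} = {0,1}"
      have "{0,1} \<in> Q3 0" by (simp add: Q3_def pairpart_def)
      then have "{x,y} \<in> Q3 0" using h by simp
      then show ?thesis by (intro exI[of _ 0] conjI bexI[of _ "{x,y}"]) auto
    next
      assume h: "{x,y} = {1,2}"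
      have "{1,2} \<in> Q3 1" by (simp add: Q3_def pairpart_def)
      then have "{x,y} \<in> Q3 1" using h by simp
      then show ?thesis by (intro exI[of _ 1] conjI bexI[of _ "{x,y}"]) auto
    next
      assume h: "{x,y} = {0,2}"
      have "{0,2} \<in> Q3 2" by (simp add: Q3_def pairpart_def)
      then have "{x,y} \<in> Q3 2" using h by simp
      then show ?thesis by (intro exI[of _ 2] conjI bexI[of _ "{x,y}"]) auto
    qed
    then show "CAG_edge 4 real Q3 2 x y" using i a by blast
  qed
qed

lemma tri_L: "CAG_clique Y3 4 real Q3 2 = {\<sigma>. \<sigma> \<noteq> {} \<and> \<sigma> \<subseteq> Y3}"
proof -
  have f: "finite Y3" unfolding Y3_def by simp
  show ?thesis unfolding CAG_clique_def clique_complex_def tri_edge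
    using finite_subset[OF _ f] by blast
qed

lemma Y3_card2: "\<sigma> \<subseteq> Y3 \<and> card \<sigma> = 2 \<longleftrightarrow> \<sigma> \<in> E3"
proof
  assume a: "\<sigma> \<subseteq> Y3 \<and> card \<sigma> = 2"
  then obtain x y where "\<sigma> = {x,y}" "x \<noteq> y" using card_2_iff[THEN iffD1] by blast
  then show "\<sigma> \<in> E3" using Y3_pairs a by blast
next
  assume "\<sigma> \<in> E3" then show "\<sigma> \<subseteq> Y3 \<and> card \<sigma> = 2" unfolding E3_def Y3_def by auto
qed

lemma Y3_card3: "\<sigma> \<subseteq> Y3 \<and> card \<sigma> = 3 \<longleftrightarrow> \<sigma> = Y3"
proof
  assume a: "\<sigma> \<subseteq> Y3 \<and> card \<sigma> = 3"
  have "card Y3 = 3" "finite Y3" unfolding Y3_def by auto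
  then show "\<sigma> = Y3" using a card_subset_eq by metis
next
  assume "\<sigma> = Y3" then show "\<sigma> \<subseteq> Y3 \<and> card \<sigma> = 3" unfolding Y3_def by auto
qed

lemma L_card2: "{\<sigma> \<in> CAG_clique Y3 4 real Q3 2. card \<sigma> = 1 + 1} = E3"
proof (rule set_eqI)
  fix \<sigma> :: "nat set"
  have "\<sigma> \<in> E3 \<Longrightarrow> \<sigma> \<noteq> {}" using E3_card by force
  then show "\<sigma> \<in> {\<sigma> \<in> CAG_clique Y3 4 real Q3 2. card \<sigma> = 1 + 1} \<longleftrightarrow> \<sigma> \<in> E3"
    unfolding tri_L using Y3_card2[of \<sigma>] by (simp only: mem_Collect_eq one_add_one) blast
qed

lemma L_card3: "{\<sigma> \<in> CAG_clique Y3 4 real Q3 2. card \<sigma> = 1 + 1 + 1} = {Y3}"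
proof -
  have "Y3 \<noteq> {}" unfolding Y3_def by simp
  show ?thesis
  proof (rule set_eqI)
    fix \<sigma> :: "nat set"
    show "\<sigma> \<in> {\<sigma> \<in> CAG_clique Y3 4 real Q3 2. card \<sigma> = 1 + 1 + 1} \<longleftrightarrow> \<sigma> \<in> {Y3}"
    proof -
      have e: "(1::nat)+1+1 = 3" by simp
      show ?thesis unfolding tri_L e using Y3_card3[of \<sigma>] \<open>Y3 \<noteq> {}\<close> by blast
    qed
  qed
qed

lemma bd2_Y3: "bd 2 {Y3} = E3"
proof -
  have "\<And>\<tau>. {\<sigma> \<in> {Y3}. \<tau> \<subseteq> \<sigma>} = (if \<tau> \<subseteq> Y3 then {Y3} else {})" by auto
  then have "bd 2 {Y3} = {\<tau>. card \<tau> = 2 \<and> \<tau> \<subseteq> Y3}" unfolding bd_def by auto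
  then show ?thesis unfolding set_eq_iff mem_Collect_eq using Y3_card2 by blast
qed

lemma fin_E3: "finite E3" unfolding E3_def by simp

lemma B3: "boundaries (CAG_clique Y3 4 real Q3 2) 1 = {{}, E3}"
proof -
  have "chains (CAG_clique Y3 4 real Q3 2) (1+1) = {c. finite c \<and> c \<subseteq> {Y3}}"
    unfolding chains_def L_card3 by simp
  also have "\<dots> = {{}, {Y3}}" by auto
  finally have ch: "chains (CAG_clique Y3 4 real Q3 2) (1+1) = {{}, {Y3}}" .
  have b2: "bd (1+1) {Y3} = E3" using bd2_Y3 by (simp only: one_add_one)
  show ?thesis unfolding boundaries_def ch by (simp only: image_insert image_empty bd_empty b2)
qed

lemma cyc_E3:
  assumes c: "c \<subseteq> E3" and b: "bd 1 c = {}"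
  shows "c = {} \<or> c = E3"
proof -
  have no_odd: "even (card {\<sigma>\<in>c. v \<in> \<sigma>})" for v :: nat
  proof -
    have "{\<sigma>\<in>c. {v} \<subseteq> \<sigma>} = {\<sigma>\<in>c. v \<in> \<sigma>}" by auto
    show ?thesis
    proof (rule ccontr)
      assume "\<not> even (card {\<sigma>\<in>c. v \<in> \<sigma>})"
      then have "{v} \<in> bd 1 c" unfolding bd_def using \<open>{\<sigma>\<in>c. {v} \<subseteq> \<sigma>} = {\<sigma>\<in>c. v \<in> \<sigma>}\<close> by simp
      then show False using b by simp
    qed
  qed
  have w1: "\<sigma> \<in> E3 \<Longrightarrow> 1 \<in> \<sigma> \<Longrightarrow> \<sigma> = {0,1} \<or> \<sigma> = {1,2}" for \<sigma> :: "nat set"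
    unfolding E3_def by auto
  have v1: "{\<sigma>\<in>c. 1 \<in> \<sigma>} = {\<sigma> \<in> {{0,1},{1,2}}. \<sigma> \<in> c}"
    using c w1 by blast
  have w2: "\<sigma> \<in> E3 \<Longrightarrow> 2 \<in> \<sigma> \<Longrightarrow> \<sigma> = {1,2} \<or> \<sigma> = {0,2}" for \<sigma> :: "nat set"
    unfolding E3_def by auto
  have v2: "{\<sigma>\<in>c. 2 \<in> \<sigma>} = {\<sigma> \<in> {{1,2},{0,2}}. \<sigma> \<in> c}"
    using c w2 by blast
  have d12: "{0,1::nat} \<noteq> {1,2}" "{1,2::nat} \<noteq> {0,2}" by (auto simp: doubleton_eq_iff)
  have cnt1: "card {\<sigma> \<in> {{0,1},{1,2}}. \<sigma> \<in> c} = (if {0,1}\<in>c then 1 else 0) + (if {1,2}\<in>c then 1 else 0)"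
    unfolding filt_insert by (simp add: d12 doubleton_eq_iff split: if_split)
  have cnt2: "card {\<sigma> \<in> {{1,2},{0,2}}. \<sigma> \<in> c} = (if {1,2}\<in>c then 1 else 0) + (if {0,2}\<in>c then 1 else 0)"
    unfolding filt_insert by (simp add: d12 doubleton_eq_iff split: if_split)
  have e1: "{0,1} \<in> c \<longleftrightarrow> {1,2} \<in> c"
    using no_odd[of 1] cnt1 unfolding v1 by (simp split: if_splits)
  have e2: "{1,2} \<in> c \<longleftrightarrow> {0,2} \<in> c"
    using no_odd[of 2] cnt2 unfolding v2 by (simp split: if_splits)
  show ?thesis
  proof (cases "{0,1} \<in> c")
    case True
    then have "E3 \<subseteq> c" using e1 e2 unfolding E3_def by simp
    then show ?thesis using c by blast
  next
    case False
    then have "{1,2} \<notin> c" "{0,2} \<notin> c" using e1 e2 by auto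
    then have "\<forall>e\<in>E3. e \<notin> c" using False unfolding E3_def by simp
    then have "c = {}" using c by blast
    then show ?thesis by simp
  qed
qed

lemma C3: "cycles (CAG_clique Y3 4 real Q3 2) 1 = {{}, E3}"
proof -
  have ch: "chains (CAG_clique Y3 4 real Q3 2) 1 = Pow E3"
    unfolding chains_def using L_card2 finite_subset[OF _ fin_E3] by auto
  show ?thesis unfolding cycles_def ch using cyc_E3 bd1_E3 by (auto simp: bd_empty)
qed

lemma tri_L_card: "card (pers_homology 1 0 (CAG_clique Y3 4 real Q3) 2) = 1"
proof -
  have "hclass {} {{}, E3} = {{}, E3}" "hclass E3 {{}, E3} = {{}, E3}"
    unfolding hclass_def chain_add_def by auto
  then show ?thesis unfolding pers_homology_def using B3 C3 by simp
qed

lemma tri_cdim: "1 \<le> cdim (MCF 4 real Q3 (real (4 - 1))) - 1"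
proof -
  have q: "Q3 3 = {Y3}" by (simp add: Q3_def)
  have "Y3 \<in> MCF 4 real Q3 3" unfolding MCF_def
    by (intro CollectI conjI exI[of _ 3] bexI[of _ Y3]) (simp_all add: q Y3_def)
  moreover have "finite (MCF 4 real Q3 3)"
    using mcf_sub[OF tri_mcf] unfolding Y3_def by (meson finite.emptyI finite_Pow_iff finite_insert rev_finite_subset)
  moreover have "card Y3 = 3" unfolding Y3_def by simp
  ultimately have "2 \<le> cdim (MCF 4 real Q3 3)" using cdim_ge[of "MCF 4 real Q3 3" Y3] by simp
  then show ?thesis by simp
qed




definition cpY :: "nat \<Rightarrow> nat set" where "cpY n = {..<2*n}"
definition cpQ :: "nat \<Rightarrow> nat \<Rightarrow> nat set set" where
  "cpQ n m = (if m < 4*n*n then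
      (if m div (2*n) div 2 \<noteq> m mod (2*n) div 2 then pairpart (cpY n) (m div (2*n)) (m mod (2*n))
       else (\<lambda>u. {u}) ` cpY n) else {cpY n})"

lemma cp_mcf:
  assumes n: "n \<ge> 1"
  shows "mcf_data (cpY n) (4*n*n+1) real (cpQ n)"
  unfolding mcf_data_def
proof (intro conjI allI impI)
  show "finite (cpY n)" unfolding cpY_def by simp
  show "strict_mono_on {..<4*n*n+1} real" by (rule strict_mono_onI) simp
  show "1 \<le> 4*n*n+1" by simp
  fix m :: nat assume "m < 4*n*n+1"
  show "partition_on (cpY n) (cpQ n m)"
  proof (cases "m < 4*n*n")
    case True
    have "m < (2*n) * (2*n)" using True by (simp add: algebra_simps)
    then have a: "m div (2*n) \<in> cpY n" unfolding cpY_def by (simp add: less_mult_imp_div_less)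
    have b: "m mod (2*n) \<in> cpY n" unfolding cpY_def using n by simp
    show ?thesis unfolding cpQ_def using True pp_part[OF a b] sing_part[of "cpY n"] by simp
  next
    case False
    have "0 \<in> cpY n" unfolding cpY_def using n by simp
    then have "cpY n \<noteq> {}" by blast
    then show ?thesis unfolding cpQ_def using False all_part by simp
  qed
qed

lemma cp_cluster:
  assumes "m < 4*n*n" "C \<in> cpQ n m" "x \<in> C" "y \<in> C" "x \<noteq> y"
  shows "x div 2 \<noteq> y div 2 \<and> card C \<le> 2"
proof (cases "m div (2*n) div 2 \<noteq> m mod (2*n) div 2")
  case True
  then have C: "C \<in> pairpart (cpY n) (m div (2*n)) (m mod (2*n))" using assms(1,2) unfolding cpQ_def by simp
  then have "C = {m div (2*n), m mod (2*n)} \<or> (\<exists>u. C = {u})" unfolding pairpart_def by blast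
  then have "C = {m div (2*n), m mod (2*n)}" using assms(3,4,5) by blast
  then have "{x,y} = {m div (2*n), m mod (2*n)}" using assms(3,4,5) by auto
  then have "x div 2 \<noteq> y div 2" using True by (auto simp: doubleton_eq_iff)
  then show ?thesis using pp_card[OF C] by simp
next
  case False
  then have "C \<in> (\<lambda>u. {u}) ` cpY n" using assms(1,2) unfolding cpQ_def by simp
  then show ?thesis using assms(3,4,5) by blast
qed

lemma cp_card:
  assumes "m < 4*n*n" "C \<in> cpQ n m"
  shows "card C \<le> 2"
proof (cases "m div (2*n) div 2 \<noteq> m mod (2*n) div 2")
  case True
  then have C: "C \<in> pairpart (cpY n) (m div (2*n)) (m mod (2*n))" using assms(1,2) unfolding cpQ_def by simp
  then show ?thesis using pp_card by metis
next
  case False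
  then have "C \<in> (\<lambda>u. {u}) ` cpY n" using assms(1,2) unfolding cpQ_def by simp
  then show ?thesis by auto
qed

lemma cp_time:
  assumes "n \<ge> 1"
  shows "real l \<le> real (4*n*n - 1) \<longleftrightarrow> l < 4*n*n"
proof -
  have "4*n*n \<ge> 1" using assms by simp
  then show ?thesis by linarith
qed

lemma cp_edge:
  assumes n: "n \<ge> 1"
  shows "CAG_edge (4*n*n+1) real (cpQ n) (real (4*n*n - 1)) x y \<longleftrightarrow> x < 2*n \<and> y < 2*n \<and> x div 2 \<noteq> y div 2"
proof -
  have i: "CAG_edge (4*n*n+1) real (cpQ n) (real (4*n*n - 1)) x y \<longleftrightarrow>
      x \<noteq> y \<and> (\<exists>l<4*n*n+1. real l \<le> real (4*n*n - 1) \<and> (\<exists>C\<in>cpQ n l. x \<in> C \<and> y \<in> C))"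
    using CAG_edge_iff[OF cp_mcf[OF n], of "real (4*n*n - 1)" x y] by simp
  show ?thesis
  proof
    assume "CAG_edge (4*n*n+1) real (cpQ n) (real (4*n*n - 1)) x y"
    then obtain l C where l: "x \<noteq> y" "l < 4*n*n+1" "real l \<le> real (4*n*n - 1)" "C \<in> cpQ n l" "x \<in> C" "y \<in> C"
      using i by blast
    have "l < 4*n*n" using l(3) cp_time[OF n] by blast
    then have "x div 2 \<noteq> y div 2" using cp_cluster l by blast
    moreover have "x \<in> cpY n" "y \<in> cpY n" using part_sub[OF mcf_part[OF cp_mcf[OF n] l(2)] l(4)] l(5,6) by auto
    ultimately show "x < 2*n \<and> y < 2*n \<and> x div 2 \<noteq> y div 2" unfolding cpY_def by simp
  next
    assume a: "x < 2*n \<and> y < 2*n \<and> x div 2 \<noteq> y div 2"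
    define l where "l = x*(2*n) + y"
    have "l < (x+1)*(2*n)" unfolding l_def using a by simp
    also have "\<dots> \<le> (2*n)*(2*n)" using a by (intro mult_right_mono) auto
    finally have l4: "l < 4*n*n" by (simp add: algebra_simps)
    have dv: "l div (2*n) = x" "l mod (2*n) = y" unfolding l_def using a by auto
    have "{x,y} \<in> cpQ n l" unfolding cpQ_def pairpart_def using l4 dv a by simp
    moreover have "real l \<le> real (4*n*n - 1)" using cp_time[OF n] l4 by blast
    moreover have "x \<noteq> y" using a by auto
    ultimately show "CAG_edge (4*n*n+1) real (cpQ n) (real (4*n*n - 1)) x y"
      using i l4 by (intro iffD2[OF i] conjI exI[of _ l] bexI[of _ "{x,y}"]) auto
  qed
qed




definition cpC :: "nat \<Rightarrow> nat set set" where
  "cpC n = {\<sigma>. bij_betw (\<lambda>v. v div 2) \<sigma> {..<n}}"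

lemma cp_parity:
  assumes n: "n \<ge> 1" and ct: "card \<tau> = n - 1"
  shows "even (card {\<sigma> \<in> cpC n. \<tau> \<subseteq> \<sigma>})"
proof (cases "{\<sigma> \<in> cpC n. \<tau> \<subseteq> \<sigma>} = {}")
  case True
  then show ?thesis by (metis card.empty even_zero)
next
  case False
  let ?f = "\<lambda>v::nat. v div 2"
  obtain \<sigma>0 where s0: "bij_betw ?f \<sigma>0 {..<n}" "\<tau> \<subseteq> \<sigma>0" using False unfolding cpC_def by blast
  have inj0: "inj_on ?f \<sigma>0" using s0(1) bij_betw_def by blast
  have injt: "inj_on ?f \<tau>" using inj_on_subset[OF inj0 s0(2)] .
  have imt: "?f ` \<tau> \<subseteq> {..<n}" using s0 unfolding bij_betw_def by blast
  have fint: "finite \<tau>" using s0 bij_betw_finite finite_subset by blast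
  have cimt: "card (?f ` \<tau>) = n - 1" using card_image[OF injt] ct by simp
  have "card ({..<n} - ?f ` \<tau>) = 1" using card_Diff_subset[OF finite_imageI[OF fint] imt] cimt n by simp
  then obtain j where j: "{..<n} - ?f ` \<tau> = {j}" using card_1_singletonE by blast
  have jn: "j < n" and jt: "j \<notin> ?f ` \<tau>" using j by auto
  have full: "insert j (?f ` \<tau>) = {..<n}" using j imt by auto
  have ins: "bij_betw ?f (insert x \<tau>) {..<n}" if "x div 2 = j" for x
  proof -
    have "x \<notin> \<tau>" using that jt by auto
    have "inj_on ?f (insert x \<tau>)" using injt that jt by auto
    moreover have "?f ` insert x \<tau> = {..<n}" using full that by simp
    ultimately show ?thesis unfolding bij_betw_def by blast
  qed
  have notin: "2*j \<notin> \<tau>" "2*j+1 \<notin> \<tau>" using jt by (auto simp: image_iff)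
  have eq: "{\<sigma> \<in> cpC n. \<tau> \<subseteq> \<sigma>} = {insert (2*j) \<tau>, insert (2*j+1) \<tau>}"
  proof (rule set_eqI, rule iffI)
    fix \<sigma> assume "\<sigma> \<in> {\<sigma> \<in> cpC n. \<tau> \<subseteq> \<sigma>}"
    then have sb: "bij_betw ?f \<sigma> {..<n}" and ts: "\<tau> \<subseteq> \<sigma>" unfolding cpC_def by auto
    have injs: "inj_on ?f \<sigma>" and ims: "?f ` \<sigma> = {..<n}" using sb unfolding bij_betw_def by auto
    have "?f ` (\<sigma> - \<tau>) = ?f ` \<sigma> - ?f ` \<tau>" using inj_on_image_set_diff[OF injs _ ts] by simp
    then have im: "?f ` (\<sigma> - \<tau>) = {j}" using ims j by simp
    then obtain x where x: "x \<in> \<sigma> - \<tau>" "x div 2 = j" by (metis imageE insertI1)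
    have "\<sigma> - \<tau> = {x}"
    proof (rule set_eqI, rule iffI)
      fix y assume y: "y \<in> \<sigma> - \<tau>"
      then have "y div 2 = j" using im by blast
      then show "y \<in> {x}" using injs x y unfolding inj_on_def by auto
    qed (use x in auto)
    then have "\<sigma> = insert x \<tau>" using ts by blast
    moreover have "x = 2*j \<or> x = 2*j+1" using x(2) by auto
    ultimately show "\<sigma> \<in> {insert (2*j) \<tau>, insert (2*j+1) \<tau>}" by auto
  next
    fix \<sigma> assume "\<sigma> \<in> {insert (2*j) \<tau>, insert (2*j+1) \<tau>}"
    then have "\<sigma> = insert (2*j) \<tau> \<or> \<sigma> = insert (2*j+1) \<tau>" by simp
    moreover have "bij_betw ?f (insert (2*j) \<tau>) {..<n}" "bij_betw ?f (insert (2*j+1) \<tau>) {..<n}"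
      using ins by auto
    ultimately show "\<sigma> \<in> {\<sigma> \<in> cpC n. \<tau> \<subseteq> \<sigma>}" unfolding cpC_def by auto
  qed
  have "insert (2*j) \<tau> \<noteq> insert (2*j+1) \<tau>"
  proof
    assume "insert (2*j) \<tau> = insert (2*j+1) \<tau>"
    then have "2*j \<in> insert (2*j+1) \<tau>" by blast
    then show False using notin by auto
  qed
  then show ?thesis unfolding eq by simp
qed

lemma cp_bd:
  assumes n: "n \<ge> 2"
  shows "bd (n - 1) (cpC n) = {}"
  unfolding bd_def using n cp_parity[of n] by auto

lemma cp_C_props:
  assumes "\<sigma> \<in> cpC n"
  shows "finite \<sigma>" "card \<sigma> = n" "\<sigma> \<subseteq> cpY n" "inj_on (\<lambda>v. v div 2) \<sigma>"
proof -
  have b: "bij_betw (\<lambda>v::nat. v div 2) \<sigma> {..<n}" using assms unfolding cpC_def by simp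
  show "finite \<sigma>" using bij_betw_finite[OF b] by simp
  show "card \<sigma> = n" using bij_betw_same_card[OF b] by simp
  show "\<sigma> \<subseteq> cpY n"
  proof
    fix x assume "x \<in> \<sigma>"
    then have "x div 2 < n" using b unfolding bij_betw_def by blast
    then show "x \<in> cpY n" unfolding cpY_def by simp
  qed
  show "inj_on (\<lambda>v. v div 2) \<sigma>" using b unfolding bij_betw_def by simp
qed

lemma cp_C_ne:
  "(\<lambda>i. 2*i) ` {..<n} \<in> cpC n"
  unfolding cpC_def by (rule CollectI, rule bij_betw_byWitness[where f'="\<lambda>i. 2*i"]) auto

lemma cp_C_fin: "finite (cpC n)"
proof -
  have "cpC n \<subseteq> Pow (cpY n)" using cp_C_props(3) by blast
  then show ?thesis unfolding cpY_def by (simp add: finite_subset)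
qed




lemma cp_K:
  assumes n: "n \<ge> 3"
  shows "card (pers_homology (n-1) 0 (MCF (4*n*n+1) real (cpQ n)) (real (4*n*n - 1))) = 1"
proof (rule pers_no_k, rule ballI)
  fix \<sigma> assume "\<sigma> \<in> MCF (4*n*n+1) real (cpQ n) (real (4*n*n - 1))"
  then obtain l C where l: "l < 4*n*n+1" "real l \<le> real (4*n*n - 1)" "C \<in> cpQ n l" "\<sigma> \<subseteq> C"
    unfolding MCF_def by blast
  have n1: "n \<ge> 1" using n by simp
  have l4: "l < 4*n*n" using l(2) cp_time[OF n1] by blast
  have "card C \<le> 2" using cp_card[OF l4 l(3)] .
  moreover have "finite C" using part_sub[OF mcf_part[OF cp_mcf[OF n1] l(1)] l(3)] unfolding cpY_def
    using finite_subset by blast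
  ultimately have "card \<sigma> \<le> 2" using card_mono[of C \<sigma>] l(4) by linarith
  then show "card \<sigma> \<noteq> n - 1 + 1" using n by simp
qed

lemma cp_L:
  assumes n: "n \<ge> 3"
  shows "card (pers_homology (n-1) 0 (CAG_clique (cpY n) (4*n*n+1) real (cpQ n)) (real (4*n*n - 1))) \<noteq> 1"
proof -
  have n1: "n \<ge> 1" using n by simp
  let ?L = "CAG_clique (cpY n) (4*n*n+1) real (cpQ n) (real (4*n*n - 1))"
  have Lmem: "\<sigma> \<in> ?L \<longleftrightarrow> \<sigma> \<noteq> {} \<and> finite \<sigma> \<and> \<sigma> \<subseteq> cpY n \<and>
      (\<forall>x\<in>\<sigma>. \<forall>y\<in>\<sigma>. x \<noteq> y \<longrightarrow> x < 2*n \<and> y < 2*n \<and> x div 2 \<noteq> y div 2)" for \<sigma>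
    unfolding CAG_clique_def clique_complex_def cp_edge[OF n1] by blast
  show ?thesis
  proof (rule two_classes[of "CAG_clique (cpY n) (4*n*n+1) real (cpQ n)" _ _ "cpC n"])
    show "\<forall>\<sigma>\<in>?L. card \<sigma> \<noteq> n - 1 + 2"
    proof
      fix \<sigma> assume "\<sigma> \<in> ?L"
      then have A: "\<sigma> \<noteq> {} \<and> finite \<sigma> \<and> \<sigma> \<subseteq> cpY n \<and>
          (\<forall>x\<in>\<sigma>. \<forall>y\<in>\<sigma>. x \<noteq> y \<longrightarrow> x < 2*n \<and> y < 2*n \<and> x div 2 \<noteq> y div 2)"
        by (rule Lmem[THEN iffD1])
      then have s: "\<sigma> \<subseteq> cpY n" "\<forall>x\<in>\<sigma>. \<forall>y\<in>\<sigma>. x \<noteq> y \<longrightarrow> x div 2 \<noteq> y div 2" by blast+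
      have "inj_on (\<lambda>v. v div 2) \<sigma>" using s(2) unfolding inj_on_def by blast
      moreover have "(\<lambda>v. v div 2) ` \<sigma> \<subseteq> {..<n}" using s(1) unfolding cpY_def by auto
      ultimately have "card \<sigma> \<le> n" using card_inj_on_le[of "\<lambda>v. v div 2" \<sigma> "{..<n}"] by simp
      then show "card \<sigma> \<noteq> n - 1 + 2" using n by simp
    qed
    have ch: "cpC n \<in> chains ?L (n-1)"
      unfolding chains_def
    proof (rule CollectI, rule conjI)
      show "finite (cpC n)" by (rule cp_C_fin)
      show "cpC n \<subseteq> {\<sigma> \<in> ?L. card \<sigma> = n - 1 + 1}"
      proof (rule subsetI)
      fix \<sigma> assume s: "\<sigma> \<in> cpC n"
      note p = cp_C_props[OF s]
      have "\<sigma> \<noteq> {}" using p(2) n by auto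
      moreover have "\<forall>x\<in>\<sigma>. \<forall>y\<in>\<sigma>. x \<noteq> y \<longrightarrow> x < 2*n \<and> y < 2*n \<and> x div 2 \<noteq> y div 2"
        using p(3,4) unfolding inj_on_def cpY_def by blast
      ultimately have "\<sigma> \<in> ?L" using p by (intro Lmem[THEN iffD2]) blast
      then show "\<sigma> \<in> {\<sigma> \<in> ?L. card \<sigma> = n - 1 + 1}" using p(2) n by simp
      qed
    qed
    have "bd (n-1) (cpC n) = {}" using cp_bd n by simp
    then show "cpC n \<in> cycles ?L (n-1)" unfolding cycles_def using ch by blast
    show "cpC n \<noteq> {}" using cp_C_ne by blast
  qed
qed

lemma cp_cdim:
  assumes n: "n \<ge> 3"
  shows "n - 1 \<le> cdim (MCF (4*n*n+1) real (cpQ n) (real (4*n*n+1 - 1))) - 1"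
proof -
  have n1: "n \<ge> 1" using n by simp
  let ?K = "MCF (4*n*n+1) real (cpQ n) (real (4*n*n+1 - 1))"
  have q: "cpQ n (4*n*n) = {cpY n}" unfolding cpQ_def by simp
  have z: "0 \<in> cpY n" unfolding cpY_def using n by simp
  then have ne: "cpY n \<noteq> {}" by blast
  have "cpY n \<in> ?K" unfolding MCF_def
    by (intro CollectI conjI exI[of _ "4*n*n"] bexI[of _ "cpY n"]) (simp_all add: q ne)
  moreover have "finite ?K"
    using mcf_sub[OF cp_mcf[OF n1]] unfolding cpY_def by (meson finite_Pow_iff finite_lessThan rev_finite_subset)
  moreover have "card (cpY n) = 2*n" unfolding cpY_def by simp
  ultimately have "2*n - 1 \<le> cdim ?K" using cdim_ge[of ?K "cpY n"] by simp
  then show ?thesis by simp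
qed


theorem proposition6:
  fixes X :: "'a set" and M :: nat and ts :: "nat \<Rightarrow> real" and P :: "nat \<Rightarrow> 'a set set"
  assumes "mcf_data X M ts P"
  shows "(\<forall>t \<ge> ts 0. \<forall>p \<ge> 0.
            pers_homology 0 p (CAG_clique X M ts P) t = pers_homology 0 p (MCF M ts P) t)
       \<and> (\<forall>k \<ge> 1. \<exists>(Y :: nat set) N us Q. mcf_data Y N us Q
            \<and> k \<le> cdim (MCF N us Q (us (N - 1))) - 1
            \<and> (\<exists>t \<ge> us 0. \<exists>p \<ge> 0.
                 card (pers_homology k p (CAG_clique Y N us Q) t)
                   \<noteq> card (pers_homology k p (MCF N us Q) t)))"
proof (intro conjI allI impI)
  fix t p :: real
  assume "ts 0 \<le> t" "0 \<le> p"
  then show "pers_homology 0 p (CAG_clique X M ts P) t = pers_homology 0 p (MCF M ts P) t"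
    using part1[OF assms] by blast
next
  fix k :: nat
  assume k: "1 \<le> k"
  show "\<exists>(Y :: nat set) N us Q. mcf_data Y N us Q
            \<and> k \<le> cdim (MCF N us Q (us (N - 1))) - 1
            \<and> (\<exists>t \<ge> us 0. \<exists>p \<ge> 0.
                 card (pers_homology k p (CAG_clique Y N us Q) t)
                   \<noteq> card (pers_homology k p (MCF N us Q) t))"
  proof (cases "k = 1")
    case True
    have "card (pers_homology 1 0 (CAG_clique Y3 4 real Q3) 2)
            \<noteq> card (pers_homology 1 0 (MCF 4 real Q3) 2)"
      using tri_L_card tri_K by simp
    then show ?thesis unfolding True
      using tri_mcf tri_cdim
      by (intro exI[of _ Y3] exI[of _ 4] exI[of _ real] exI[of _ Q3] conjI exI[of _ 2] exI[of _ 0]) auto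
  next
    case False
    define n where "n = k + 1"
    have n: "n \<ge> 3" using k False n_def by simp
    have kn: "k = n - 1" using n_def by simp
    have "card (pers_homology (n-1) 0 (CAG_clique (cpY n) (4*n*n+1) real (cpQ n)) (real (4*n*n - 1)))
        \<noteq> card (pers_homology (n-1) 0 (MCF (4*n*n+1) real (cpQ n)) (real (4*n*n - 1)))"
      using cp_L[OF n] cp_K[OF n] by simp
    moreover have "mcf_data (cpY n) (4*n*n+1) real (cpQ n)" using cp_mcf n by simp
    moreover have "n - 1 \<le> cdim (MCF (4*n*n+1) real (cpQ n) (real (4*n*n+1 - 1))) - 1"
      using cp_cdim[OF n] .
    ultimately show ?thesis unfolding kn
      by (intro exI[of _ "cpY n"] exI[of _ "4*n*n+1"] exI[of _ real] exI[of _ "cpQ n"] conjI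
          exI[of _ "real (4*n*n - 1)"] exI[of _ 0]) auto
  qed
qed

end
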